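(* Let $\lambda>0$, $p\in(0,1)$, $\lambda_{max}>0$, $R>0$, and for $q\in[0,1]$ let $f_1(q)=\frac{pq}{p+q-pq}$ and $C_1(q)=\lambda f_1(q)\exp\!\big(-\frac{\lambda f_1(q)}{\lambda_{max}}\big)R$. If $\frac{\lambda_{max}}{\lambda}\le p$, then $q^\star=\frac{p\lambda_{max}}{\lambda p-\lambda_{max}(1-p)}\in(0,1]$ maximizes $C_1$ over $[0,1]$; if $\frac{\lambda_{max}}{\lambda}>p$, then $q^\star=1$ maximizes $C_1$ over $[0,1]$.
   Context: This is the unit battery capacity ($B=1$) case of the ALOHA energy-harvesting model: $f_1(q)$ is the probability that a transmitter (energy arrivals i.i.d. Bernoulli($p$) per slot, battery of capacity $1$, transmits with probability $q$ when the battery is nonempty) transmits in a slot, and $C_1(q)$ is the transmission capacity of a Poisson network of density $\lambda$ with $\lambda_{max}=\frac{1}{d^2\theta^{2/\alpha}\kappa(\alpha)}$, $\kappa(\alpha)=\frac{2\pi^2}{\alpha\sin(2\pi/\alpha)}$, $R=\log(1+\theta)$. *)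

theory Defs
  imports Complex_Main
begin

definition f1 :: "real \<Rightarrow> real \<Rightarrow> real" where
  "f1 p q = p * q / (p + q - p * q)"

definition C1 :: "real \<Rightarrow> real \<Rightarrow> real \<Rightarrow> real \<Rightarrow> real \<Rightarrow> real" where
  "C1 lam p lmax R q = lam * f1 p q * exp (- (lam * f1 p q / lmax)) * R"

end

theory Submission
  imports Defs
begin

lemma hbound:
  fixes x m :: real assumes "x \<ge> 0" "m > 0"
  shows "x * exp (-(x/m)) \<le> m * exp (-(m/m))"
proof -
  have "x/m \<le> exp (x/m - 1)" using exp_ge_add_one_self[of "x/m - 1"] by simp
  hence "x/m * exp (-(x/m)) \<le> exp (x/m - 1) * exp (-(x/m))"
    by (intro mult_right_mono) auto
  also have "\<dots> = exp (-1)" by (simp add: exp_add[symmetric])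
  finally have "x/m * exp (-(x/m)) \<le> exp (-1)" .
  hence "m * (x/m * exp (-(x/m))) \<le> m * exp (-1)" using assms by (intro mult_left_mono) auto
  thus ?thesis using assms by simp
qed

lemma hmono:
  fixes x y m :: real assumes "0 \<le> x" "x \<le> y" "y \<le> m" "m > 0"
  shows "x * exp (-(x/m)) \<le> y * exp (-(y/m))"
proof (cases "y = 0")
  case True thus ?thesis using assms by simp
next
  case False
  hence yp: "y > 0" using assms by simp
  have "1 - (y-x)/y \<le> 1 - (y-x)/m"
    using assms yp by (intro diff_left_mono divide_left_mono) auto
  also have "\<dots> \<le> exp (-((y-x)/m))" using exp_ge_add_one_self[of "-((y-x)/m)"] by simp
  finally have "x/y \<le> exp (-((y-x)/m))" using yp by (simp add: field_simps)
  hence "x \<le> y * exp (-((y-x)/m))" using yp by (simp add: field_simps)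
  hence "x * exp (-(x/m)) \<le> y * exp (-((y-x)/m)) * exp (-(x/m))"
    by (intro mult_right_mono) auto
  also have "\<dots> = y * exp (-(y/m))"
    by (simp add: mult.assoc exp_add[symmetric] diff_divide_distrib)
  finally show ?thesis .
qed

lemma f1_range:
  fixes p q :: real assumes "0 < p" "p < 1" "0 \<le> q" "q \<le> 1"
  shows "0 \<le> f1 p q \<and> f1 p q \<le> p"
proof -
  have "q*(1-p) \<ge> 0" using assms by simp
  hence d: "p + q - p*q > 0" using assms by (simp add: algebra_simps)
  have "p*p*(1-q) \<ge> 0" using assms by simp
  hence "p*q \<le> p * (p + q - p*q)" by (simp add: algebra_simps)
  thus ?thesis using d assms unfolding f1_def by (simp add: divide_le_eq)
qed

lemma C1_eq: "C1 lam p lmax R q = R * ((lam * f1 p q) * exp (-((lam * f1 p q)/lmax)))"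
  unfolding C1_def by simp

theorem corollary1:
  fixes lam p lmax R :: real
  assumes "lam > 0" and "0 < p" and "p < 1" and "lmax > 0" and "R > 0"
  shows "(lmax / lam \<le> p \<longrightarrow>
           (let qs = p * lmax / (lam * p - lmax * (1 - p)) in
              0 < qs \<and> qs \<le> 1 \<and>
              (\<forall>q\<in>{0..1}. C1 lam p lmax R q \<le> C1 lam p lmax R qs)))
       \<and> (lmax / lam > p \<longrightarrow>
           (\<forall>q\<in>{0..1}. C1 lam p lmax R q \<le> C1 lam p lmax R 1))"
proof (intro conjI impI)
  assume h: "lmax / lam \<le> p"
  hence hl: "lmax \<le> lam * p" using assms by (simp add: divide_le_eq mult.commute)
  define D where "D = lam * p - lmax * (1 - p)"
  have "lmax * (1-p) \<le> lam * p * (1-p)" using hl assms by (intro mult_right_mono) auto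
  moreover have "lam * p * (1-p) < lam * p" using assms by (simp add: algebra_simps)
  ultimately have Dp: "D > 0" unfolding D_def by linarith
  define qs where "qs = p * lmax / D"
  have qs0: "0 < qs" unfolding qs_def using Dp assms by simp
  have qs1: "qs \<le> 1" unfolding qs_def using Dp hl
    by (simp add: divide_le_eq D_def algebra_simps)
  have "p + qs - p*qs = (p*D + p*lmax*(1-p))/D"
    unfolding qs_def using Dp by (simp add: field_simps)
  also have "p*D + p*lmax*(1-p) = p*(lam*p)" unfolding D_def by (simp add: algebra_simps)
  finally have den: "p + qs - p*qs = p*(lam*p)/D" .
  have "lam * f1 p qs = lam * (p * (p*lmax/D)) / (p*(lam*p)/D)"
    unfolding f1_def den unfolding qs_def by simp
  also have "\<dots> = lmax" using Dp assms by (simp add: field_simps)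
  finally have fq: "lam * f1 p qs = lmax" .
  have "\<forall>q\<in>{0..1}. C1 lam p lmax R q \<le> C1 lam p lmax R qs"
  proof
    fix q :: real assume "q \<in> {0..1}"
    hence "0 \<le> f1 p q" using f1_range assms by auto
    hence "lam * f1 p q * exp (-(lam * f1 p q/lmax)) \<le> lmax * exp (-(lmax/lmax))"
      using hbound assms by simp
    thus "C1 lam p lmax R q \<le> C1 lam p lmax R qs"
      unfolding C1_eq fq using assms by (intro mult_left_mono) auto
  qed
  thus "let qs = p * lmax / (lam * p - lmax * (1 - p)) in
              0 < qs \<and> qs \<le> 1 \<and>
              (\<forall>q\<in>{0..1}. C1 lam p lmax R q \<le> C1 lam p lmax R qs)"
    using qs0 qs1 unfolding qs_def D_def Let_def by simp
next
  assume h: "lmax / lam > p"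
  hence hl: "lam * p < lmax" using assms by (simp add: less_divide_eq mult.commute)
  have f11: "f1 p 1 = p" unfolding f1_def using assms by simp
  show "\<forall>q\<in>{0..1}. C1 lam p lmax R q \<le> C1 lam p lmax R 1"
  proof
    fix q :: real assume "q \<in> {0..1}"
    hence r: "0 \<le> f1 p q" "f1 p q \<le> p" using f1_range assms by auto
    have "lam * f1 p q * exp (-(lam * f1 p q/lmax)) \<le> (lam*p) * exp (-((lam*p)/lmax))"
      using r assms hl by (intro hmono) (auto intro: mult_left_mono)
    thus "C1 lam p lmax R q \<le> C1 lam p lmax R 1"
      unfolding C1_eq f11 using assms by (intro mult_left_mono) auto
  qed
qed

end
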